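(* Let $\Theta=(\theta_k)_{k\ge1}$ be a sequence of positive real numbers such that $g(z)=\sum_{k\ge1}\frac{\theta_k}{k}z^k$ has radius of convergence $r\in(0,\infty)$. Let $(Y_\ell)_{\ell\ge1}$ be independent Poisson random variables, $Y_\ell$ with parameter $\frac{r^\ell\theta_\ell}{\ell}$, let $X_k=\sum_{\ell\mid k}\ell Y_\ell$ and $f(z)=\sum_{k\ge1}\frac{X_k}{k}z^k$. Then almost surely, for every $z\in\mathbb{D}=\{z\in\mathbb{C}:|z|<1\}$, $$\exp(-f(z))=\prod_{k\ge1}(1-z^k)^{Y_k}.$$ *)

theory Defs
  imports "HOL-Analysis.Analysis" "HOL-Probability.Probability"
begin

definition Xdiv :: "(nat \<Rightarrow> 'a \<Rightarrow> nat) \<Rightarrow> nat \<Rightarrow> 'a \<Rightarrow> nat" where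
  "Xdiv Y k \<omega> = (\<Sum>l | l dvd k. l * Y l \<omega>)"

end

theory Submission
  imports Defs
begin

lemma det_abs:
  fixes y :: "nat \<Rightarrow> nat" and z :: complex
  assumes t1: "norm z < 1" and sy: "summable (\<lambda>l. real (y (Suc l)) * norm z ^ Suc l)"
  defines "G \<equiv> (\<lambda>(a,m). of_nat (y (Suc a)) * z ^ (Suc a * Suc m) / of_nat (Suc m) :: complex)"
  shows "(\<lambda>x. norm (G x)) summable_on UNIV"
proof -
  define t where "t = norm z"
  have t0: "0 \<le> t" "t < 1" using t1 by (auto simp: t_def)
  define u where "u a = real (y (Suc a)) * t ^ Suc a" for a
  define H where "H = (\<lambda>(a,m). u a * t ^ m)"
  have geo: "((\<lambda>m. t ^ m) has_sum (1 / (1 - t))) UNIV"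
    using t0 by (intro sums_nonneg_imp_has_sum geometric_sums) auto
  have "(\<lambda>x. norm (H x)) summable_on Sigma UNIV (\<lambda>_. UNIV)"
  proof (subst Infinite_Sum.abs_summable_on_Sigma_iff, intro conjI ballI)
    fix a :: nat
    show "(\<lambda>m. norm (H (a, m))) summable_on UNIV"
      using has_sum_cmult_right[OF geo, of "u a"] t0
      by (auto simp: H_def u_def abs_mult intro!: has_sum_imp_summable)
    have "infsum (\<lambda>m. norm (H (a, m))) UNIV = u a * (1 / (1 - t))"
      using has_sum_cmult_right[OF geo, of "u a"] t0
      by (intro infsumI) (auto simp: H_def u_def abs_mult)
  next
    have e: "infsum (\<lambda>m. norm (H (a, m))) UNIV = u a * (1 / (1 - t))" for a
    proof -
      show "infsum (\<lambda>m. norm (H (a, m))) UNIV = u a * (1 / (1 - t))"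
        using has_sum_cmult_right[OF geo, of "u a"] t0
        by (intro infsumI) (auto simp: H_def u_def abs_mult)
    qed
    have "summable (\<lambda>a. u a * (1 / (1 - t)))"
      using sy by (intro summable_mult2) (simp add: u_def t_def)
    then have "(\<lambda>a. u a * (1 / (1 - t))) summable_on UNIV"
      using t0 by (intro summable_nonneg_imp_summable_on) (auto simp: u_def)
    then show "(\<lambda>a. norm (infsum (\<lambda>m. norm (H (a, m))) UNIV)) summable_on UNIV"
      using t0 by (simp only: e) (simp add: u_def abs_mult)
  qed
  then have Hs: "(\<lambda>x. norm (H x)) summable_on UNIV" by simp
  show ?thesis
  proof (rule Infinite_Sum.abs_summable_on_comparison_test[OF Hs])
    fix x :: "nat \<times> nat"
    obtain a m where x: "x = (a,m)" by (cases x)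
    have "norm (G x) = real (y (Suc a)) * t ^ (Suc a * Suc m) / real (Suc m)"
      by (simp add: G_def x norm_divide norm_mult norm_power t_def del: of_nat_Suc)
    also have "\<dots> \<le> real (y (Suc a)) * t ^ (Suc a * Suc m)"
      using divide_left_mono[of 1 "real (Suc m)" "real (y (Suc a)) * t ^ (Suc a * Suc m)"] t0 by simp
    also have "\<dots> \<le> real (y (Suc a)) * t ^ (Suc a + m)"
      using t0 by (intro mult_left_mono power_decreasing) auto
    also have "\<dots> = norm (H x)"
      using t0 by (simp add: H_def x u_def power_add abs_mult)
    finally show "norm (G x) \<le> norm (H x)" .
  qed
qed

lemma det_main:
  fixes y :: "nat \<Rightarrow> nat" and z :: complex
  assumes t1: "norm z < 1" and sy: "summable (\<lambda>l. real (y (Suc l)) * norm z ^ Suc l)"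
  shows "\<exists>s. (\<lambda>k. of_nat (\<Sum>l | l dvd Suc k. l * y l) / of_nat (Suc k) * z ^ Suc k) sums s
         \<and> (\<lambda>k. (1 - z ^ Suc k) ^ y (Suc k)) has_prod exp (- s)"
proof -
  define G where "G \<equiv> (\<lambda>(a,m). of_nat (y (Suc a)) * z ^ (Suc a * Suc m) / of_nat (Suc m) :: complex)"
  define t where "t = norm z"
  have t0: "0 \<le> t" "t < 1" using t1 by (auto simp: t_def)
  have abs: "(\<lambda>x. norm (G x)) summable_on UNIV"
    unfolding G_def by (rule det_abs[OF t1 sy])
  have "G summable_on UNIV"
    using abs by (rule abs_summable_summable)
  define T where "T = infsum G UNIV"
  have GT: "(G has_sum T) UNIV"
    unfolding T_def using \<open>G summable_on UNIV\<close> by (rule has_sum_infsum)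
  have wlt: "norm (z ^ Suc a) < 1" for a
  proof -
    have "norm (z ^ Suc a) = t ^ Suc a" by (simp only: norm_power t_def)
    also have "\<dots> < 1" using t0 by (simp only: power_less_one_iff) simp
    finally show ?thesis .
  qed
  have fib: "((\<lambda>m. G (a, m)) has_sum (of_nat (y (Suc a)) * - Ln (1 - z ^ Suc a))) UNIV" for a
  proof -
    define w where "w = z ^ Suc a"
    have "(\<lambda>n. - ((- (- w)) ^ n) / of_nat n) sums ln (1 + - w)"
      by (rule Ln_series') (use wlt in \<open>simp add: w_def\<close>)
    then have "(\<lambda>n. - (w ^ n) / of_nat n) sums Ln (1 - w)" by simp
    then have "(\<lambda>n. - (w ^ Suc n) / of_nat (Suc n)) sums Ln (1 - w)"
      by (subst sums_Suc_iff) simp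
    then have "(\<lambda>n. - (- (w ^ Suc n) / of_nat (Suc n))) sums (- Ln (1 - w))"
      by (rule sums_minus)
    then have "(\<lambda>n. of_nat (y (Suc a)) * (- (- (w ^ Suc n) / of_nat (Suc n)))) sums (of_nat (y (Suc a)) * - Ln (1 - w))"
      by (rule sums_mult)
    moreover have pw: "z ^ (Suc a * Suc n) = w ^ Suc n" for n by (simp only: w_def power_mult)
    then have "(\<lambda>m. G (a, m)) = (\<lambda>n. of_nat (y (Suc a)) * (- (- (w ^ Suc n) / of_nat (Suc n))))"
      by (simp only: G_def case_prod_conv pw) (simp add: fun_eq_iff)
    ultimately have S: "(\<lambda>m. G (a, m)) sums (of_nat (y (Suc a)) * - Ln (1 - w))"
      by simp
    have "summable (\<lambda>m. norm (G (a, m)))"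
    proof (rule summable_comparison_test)
      show "summable (\<lambda>m. real (y (Suc a)) * t ^ m)"
        using t0 by (intro summable_mult summable_geometric) auto
      show "\<exists>N. \<forall>n\<ge>N. norm (norm (G (a, n))) \<le> real (y (Suc a)) * t ^ n"
      proof (intro exI allI impI)
        fix n :: nat
        have "norm (norm (G (a, n))) = real (y (Suc a)) * t ^ (Suc a * Suc n) / real (Suc n)"
          by (simp add: G_def norm_divide norm_mult norm_power t_def del: of_nat_Suc)
        also have "\<dots> \<le> real (y (Suc a)) * t ^ (Suc a * Suc n)"
          using divide_left_mono[of 1 "real (Suc n)" "real (y (Suc a)) * t ^ (Suc a * Suc n)"] t0 by simp
        also have "\<dots> \<le> real (y (Suc a)) * t ^ n"
          using t0 by (intro mult_left_mono power_decreasing) auto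
        finally show "norm (norm (G (a, n))) \<le> real (y (Suc a)) * t ^ n" .
      qed
    qed
    from norm_summable_imp_has_sum[OF this S] show ?thesis by (simp add: w_def)
  qed
  have GT': "(G has_sum T) (Sigma UNIV (\<lambda>_. UNIV))" using GT by simp
  have S1: "((\<lambda>a. of_nat (y (Suc a)) * - Ln (1 - z ^ Suc a)) has_sum T) UNIV"
    by (rule has_sum_Sigma'[OF GT' fib])
  define D where "D k = {d. d dvd Suc k}" for k
  define F where "F = (\<lambda>(k, d). of_nat (y d) * z ^ Suc k / of_nat (Suc k div d) :: complex)"
  have "(G has_sum T) UNIV = (F has_sum T) (Sigma UNIV D)"
  proof (rule has_sum_reindex_bij_witness[where i = "\<lambda>(k,d). (d - 1, Suc k div d - 1)"
        and j = "\<lambda>(a,m). (Suc a * Suc m - 1, Suc a)"])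
    fix p :: "nat \<times> nat"
    obtain a m where p: "p = (a, m)" by (cases p)
    have h1: "Suc (Suc a * Suc m - 1) = Suc a * Suc m" by simp
    have h2: "Suc a * Suc m div Suc a = Suc m" by (rule nonzero_mult_div_cancel_left) simp
    show "(case case p of (a, m) \<Rightarrow> (Suc a * Suc m - 1, Suc a) of (k, d) \<Rightarrow> (d - 1, Suc k div d - 1)) = p"
      by (simp only: p case_prod_conv h1 h2) simp
    show "(case p of (a, m) \<Rightarrow> (Suc a * Suc m - 1, Suc a)) \<in> Sigma UNIV D"
    proof -
      have "Suc a \<in> D (Suc a * Suc m - 1)" unfolding D_def mem_Collect_eq by (subst h1) (rule dvd_triv_left)
      then show ?thesis by (simp only: p case_prod_conv) simp
    qed
    show "F (case p of (a, m) \<Rightarrow> (Suc a * Suc m - 1, Suc a)) = G p"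
      by (simp only: p F_def G_def case_prod_conv h1 h2)
  next
    fix p :: "nat \<times> nat"
    assume "p \<in> Sigma UNIV D"
    then obtain k d where p: "p = (k, d)" and dd: "d dvd Suc k" by (auto simp: D_def)
    then obtain e where e: "Suc k = d * e" by auto
    then have "d > 0" "e > 0" by (metis nat.distinct(1) mult_is_0 neq0_conv)+
    then have q1: "Suc k div d = e" using e by simp
    have q2: "Suc (d - 1) = d" "Suc (e - 1) = e" using \<open>d > 0\<close> \<open>e > 0\<close> by simp_all
    have q3: "d * e - 1 = k" using e by simp
    show "(case case p of (k, d) \<Rightarrow> (d - 1, Suc k div d - 1) of (a, m) \<Rightarrow> (Suc a * Suc m - 1, Suc a)) = p"
      by (simp only: p case_prod_conv q1 q2 q3)
    show "(case p of (k, d) \<Rightarrow> (d - 1, Suc k div d - 1)) \<in> UNIV" by simp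
  qed simp_all
  with GT have FT: "(F has_sum T) (Sigma UNIV D)" by simp
  have fin: "((\<lambda>d. F (k, d)) has_sum (\<Sum>d\<in>D k. F (k, d))) (D k)" for k
    by (rule has_sum_finite) (simp add: D_def)
  have S2: "((\<lambda>k. \<Sum>d\<in>D k. F (k, d)) has_sum T) UNIV"
    by (rule has_sum_Sigma'[OF FT fin])
  have eq: "(\<Sum>d\<in>D k. F (k, d)) = of_nat (\<Sum>l | l dvd Suc k. l * y l) / of_nat (Suc k) * z ^ Suc k" for k
  proof -
    have "(\<Sum>d\<in>D k. F (k, d)) = (\<Sum>d\<in>D k. of_nat (d * y d) / of_nat (Suc k) * z ^ Suc k)"
    proof (rule sum.cong)
      fix d assume "d \<in> D k"
      then obtain e where e: "Suc k = d * e" by (auto simp: D_def)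
      then have "d > 0" "e > 0" by (metis nat.distinct(1) mult_is_0 neq0_conv)+
      have q1: "Suc k div d = e" using e \<open>d > 0\<close> by simp
      have q4: "(of_nat (Suc k)::complex) = of_nat d * of_nat e" using e by (metis of_nat_mult)
      show "F (k, d) = of_nat (d * y d) / of_nat (Suc k) * z ^ Suc k"
        unfolding F_def case_prod_conv q1 q4 using \<open>d > 0\<close> \<open>e > 0\<close>
        by (simp add: field_simps del: of_nat_Suc power_Suc)
    qed simp
    also have "\<dots> = of_nat (\<Sum>l | l dvd Suc k. l * y l) / of_nat (Suc k) * z ^ Suc k"
      by (simp add: D_def sum_distrib_right sum_divide_distrib)
    finally show ?thesis .
  qed
  have sumsT: "(\<lambda>k. of_nat (\<Sum>l | l dvd Suc k. l * y l) / of_nat (Suc k) * z ^ Suc k) sums T"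
    using has_sum_imp_sums[OF S2] by (simp add: eq)
  have "(\<lambda>a. - (of_nat (y (Suc a)) * - Ln (1 - z ^ Suc a))) sums (- T)"
    using has_sum_imp_sums[OF S1] by (rule sums_minus)
  then have "(\<lambda>a. of_nat (y (Suc a)) * Ln (1 - z ^ Suc a)) sums (- T)" by simp
  from sums_imp_has_prod_exp[OF this]
  have "(\<lambda>k. exp (of_nat (y (Suc k)) * Ln (1 - z ^ Suc k))) has_prod exp (- T)"
    by (simp add: has_prod_def)
  moreover have "exp (of_nat (y (Suc k)) * Ln (1 - z ^ Suc k)) = (1 - z ^ Suc k) ^ y (Suc k)" for k
  proof -
    have "1 - z ^ Suc k \<noteq> 0" using wlt[of k] by auto
    then show ?thesis by (simp add: exp_of_nat_mult exp_Ln)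
  qed
  ultimately have "(\<lambda>k. (1 - z ^ Suc k) ^ y (Suc k)) has_prod exp (- T)" by simp
  with sumsT show ?thesis by blast
qed

lemma poisson_mean:
  fixes c :: real assumes c: "0 < c"
  shows "(\<integral>\<^sup>+x. ennreal (real x) \<partial>measure_pmf (poisson_pmf c)) = ennreal c"
proof -
  define g where "g x = c ^ x / fact x * exp (- c) * real x" for x
  have "(\<lambda>n. c ^ n /\<^sub>R fact n) sums exp c" by (rule exp_converges)
  then have "(\<lambda>n. c ^ n / fact n) sums exp c" by (simp add: divide_inverse_commute)
  then have "(\<lambda>n. (c * exp (- c)) * (c ^ n / fact n)) sums ((c * exp (- c)) * exp c)"
    by (rule sums_mult)
  moreover have "(c * exp (- c)) * exp c = c" by (simp add: exp_minus field_simps)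
  moreover have "(c * exp (- c)) * (c ^ n / fact n) = g (Suc n)" for n
  proof -
    have p: "real (Suc n) > 0" "(fact n :: real) > 0" by simp_all
    have "c ^ Suc n / fact (Suc n) * real (Suc n) = c ^ Suc n / fact n"
      unfolding fact_Suc using p by (simp del: of_nat_Suc add: divide_simps)
    then show ?thesis by (simp only: g_def) (simp add: field_simps del: of_nat_Suc)
  qed
  ultimately have "(\<lambda>n. g (Suc n)) sums c" by simp
  then have gs: "g sums c" by (subst (asm) sums_Suc_iff) (simp add: g_def)
  have gn: "0 \<le> g x" for x using c by (simp add: g_def)
  have "(\<integral>\<^sup>+x. ennreal (real x) \<partial>measure_pmf (poisson_pmf c))
      = (\<integral>\<^sup>+x. ennreal (g x) \<partial>count_space UNIV)"
    unfolding nn_integral_measure_pmf using c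
    by (intro nn_integral_cong) (subst ennreal_mult[symmetric], auto simp: g_def)
  also have "\<dots> = (\<Sum>x. ennreal (g x))" by (rule nn_integral_count_space_nat)
  also have "\<dots> = ennreal (\<Sum>x. g x)" using gn gs by (intro suminf_ennreal2) (auto simp: sums_iff)
  also have "(\<Sum>x. g x) = c" using gs by (simp add: sums_iff)
  finally show ?thesis .
qed

theorem mainTheorem7:
  fixes M :: "'a measure" and \<theta> :: "nat \<Rightarrow> real" and r :: real
    and Y :: "nat \<Rightarrow> 'a \<Rightarrow> nat"
  assumes "prob_space M"
    and "\<forall>k\<ge>1. \<theta> k > 0"
    and "conv_radius (\<lambda>k. if k = 0 then 0 else \<theta> k / real k) = ereal r"
    and "0 < r"
    and "prob_space.indep_vars M (\<lambda>_. count_space UNIV) Y {1..}"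
    and "\<forall>l\<ge>1. distr M (count_space UNIV) (Y l)
                 = measure_pmf (poisson_pmf (r ^ l * \<theta> l / real l))"
  shows "AE \<omega> in M. \<forall>z::complex \<in> ball 0 1. \<exists>s.
           (\<lambda>k. of_nat (Xdiv Y (Suc k) \<omega>) / of_nat (Suc k) * z ^ Suc k) sums s
         \<and> (\<lambda>k. (1 - z ^ Suc k) ^ Y (Suc k) \<omega>) has_prod exp (- s)"
proof -
  interpret prob_space M by fact
  define cr where "cr = (\<lambda>k. if k = 0 then 0 else \<theta> k / real k)"
  define rate where "rate l = r ^ l * \<theta> l / real l" for l
  have ratepos: "rate (Suc n) > 0" for n
    using assms(2,4) by (simp add: rate_def)
  have Ymeas: "Y (Suc n) \<in> measurable M (count_space UNIV)" for n
    using assms(5) unfolding indep_vars_def by auto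
  have mean: "(\<integral>\<^sup>+\<omega>. ennreal (real (Y (Suc n) \<omega>)) \<partial>M) = ennreal (rate (Suc n))" for n
  proof -
    have "(\<integral>\<^sup>+\<omega>. ennreal (real (Y (Suc n) \<omega>)) \<partial>M)
        = (\<integral>\<^sup>+x. ennreal (real x) \<partial>distr M (count_space UNIV) (Y (Suc n)))"
      by (rule nn_integral_distr[symmetric]) (use Ymeas in auto)
    also have "\<dots> = (\<integral>\<^sup>+x. ennreal (real x) \<partial>measure_pmf (poisson_pmf (rate (Suc n))))"
      using assms(6) by (simp add: rate_def del: of_nat_Suc power_Suc)
    also have "\<dots> = ennreal (rate (Suc n))" by (rule poisson_mean[OF ratepos])
    finally show ?thesis .
  qed
  have AEr: "AE \<omega> in M. summable (\<lambda>n. real (Y (Suc n) \<omega>) * \<rho> ^ Suc n)"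
    if \<rho>: "0 < \<rho>" "\<rho> < 1" for \<rho> :: real
  proof -
    have "ereal (norm (r * \<rho>)) < conv_radius cr"
      using assms(3,4) \<rho> by (simp add: cr_def abs_mult)
    from summable_in_conv_radius[OF this]
    have "summable (\<lambda>n. cr n * (r * \<rho>) ^ n)" .
    then have "summable (\<lambda>n. cr (Suc n) * (r * \<rho>) ^ Suc n)"
      by (subst summable_Suc_iff)
    moreover have "cr (Suc n) * (r * \<rho>) ^ Suc n = \<rho> ^ Suc n * rate (Suc n)" for n
      by (simp add: cr_def rate_def power_mult_distrib del: of_nat_Suc power_Suc)
    ultimately have cs: "summable (\<lambda>n. \<rho> ^ Suc n * rate (Suc n))" by (simp only:)
    have cn: "0 \<le> \<rho> ^ Suc n * rate (Suc n)" for n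
      using ratepos[of n] \<rho> by simp
    define f where "f \<omega> = (\<Sum>n. ennreal (real (Y (Suc n) \<omega>) * \<rho> ^ Suc n))" for \<omega>
    have mi: "(\<lambda>\<omega>. ennreal (real (Y (Suc n) \<omega>) * \<rho> ^ Suc n)) \<in> borel_measurable M" for n
      by (rule measurable_compose[OF Ymeas]) simp
    have "integral\<^sup>N M f = (\<Sum>n. \<integral>\<^sup>+\<omega>. ennreal (real (Y (Suc n) \<omega>) * \<rho> ^ Suc n) \<partial>M)"
      unfolding f_def by (rule nn_integral_suminf[OF mi])
    also have "\<dots> = (\<Sum>n. ennreal (\<rho> ^ Suc n * rate (Suc n)))"
    proof (rule suminf_cong)
      fix n
      have "(\<integral>\<^sup>+\<omega>. ennreal (real (Y (Suc n) \<omega>) * \<rho> ^ Suc n) \<partial>M)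
          = (\<integral>\<^sup>+\<omega>. ennreal (\<rho> ^ Suc n) * ennreal (real (Y (Suc n) \<omega>)) \<partial>M)"
        using \<rho> by (intro nn_integral_cong) (simp add: ennreal_mult[symmetric] mult.commute)
      also have "\<dots> = ennreal (\<rho> ^ Suc n) * ennreal (rate (Suc n))"
        by (subst nn_integral_cmult) (use Ymeas in \<open>auto simp: mean\<close>)
      also have "\<dots> = ennreal (\<rho> ^ Suc n * rate (Suc n))"
        using \<rho> ratepos[of n] by (simp add: ennreal_mult)
      finally show "(\<integral>\<^sup>+\<omega>. ennreal (real (Y (Suc n) \<omega>) * \<rho> ^ Suc n) \<partial>M) = ennreal (\<rho> ^ Suc n * rate (Suc n))" .
    qed
    also have "\<dots> \<noteq> \<infinity>" using ennreal_suminf_neq_top[OF cs cn] by simp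
    finally have "integral\<^sup>N M f \<noteq> \<infinity>" .
    moreover have fm: "f \<in> borel_measurable M"
      unfolding f_def by (rule borel_measurable_suminf_order) (rule mi)
    ultimately have "AE \<omega> in M. f \<omega> \<noteq> \<infinity>"
      using nn_integral_noteq_infinite[OF fm] by simp
    then show ?thesis
    proof (rule AE_mp, intro AE_I2 impI)
      fix \<omega> assume "f \<omega> \<noteq> \<infinity>"
      then show "summable (\<lambda>n. real (Y (Suc n) \<omega>) * \<rho> ^ Suc n)"
        using \<rho> by (intro summable_suminf_not_top) (auto simp: f_def)
    qed
  qed
  have "AE \<omega> in M. \<forall>j::nat. summable (\<lambda>n. real (Y (Suc n) \<omega>) * (1 - 1 / real (Suc (Suc j))) ^ Suc n)"
    unfolding AE_all_countable
  proof
    fix j :: nat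
    show "AE \<omega> in M. summable (\<lambda>n. real (Y (Suc n) \<omega>) * (1 - 1 / real (Suc (Suc j))) ^ Suc n)"
      by (rule AEr) (auto simp: field_simps)
  qed
  then show ?thesis
  proof (rule AE_mp, intro AE_I2 impI ballI)
    fix \<omega> and z :: complex
    assume H: "\<forall>j::nat. summable (\<lambda>n. real (Y (Suc n) \<omega>) * (1 - 1 / real (Suc (Suc j))) ^ Suc n)"
    assume "z \<in> ball 0 1"
    then have z1: "norm z < 1" by simp
    obtain j :: nat where j: "1 / (1 - norm z) < real j"
      using reals_Archimedean2 by blast
    have "1 - norm z > 0" using z1 by simp
    then have "1 < real j * (1 - norm z)" using j by (simp add: field_simps)
    then have "1 / real (Suc (Suc j)) < 1 - norm z"
      using \<open>1 - norm z > 0\<close> by (simp add: field_simps)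
    then have zr: "norm z \<le> 1 - 1 / real (Suc (Suc j))" by simp
    have "summable (\<lambda>n. real (Y (Suc n) \<omega>) * norm z ^ Suc n)"
    proof (rule summable_comparison_test[OF _ H[rule_format, of j]])
      show "\<exists>N. \<forall>n\<ge>N. norm (real (Y (Suc n) \<omega>) * norm z ^ Suc n)
          \<le> real (Y (Suc n) \<omega>) * (1 - 1 / real (Suc (Suc j))) ^ Suc n"
      proof (intro exI allI impI)
        fix n :: nat
        have pm: "norm z ^ Suc n \<le> (1 - 1 / real (Suc (Suc j))) ^ Suc n"
          by (rule power_mono[OF zr]) simp
        have "norm (real (Y (Suc n) \<omega>) * norm z ^ Suc n) = real (Y (Suc n) \<omega>) * norm z ^ Suc n"
          by (simp add: abs_mult)
        also have "\<dots> \<le> real (Y (Suc n) \<omega>) * (1 - 1 / real (Suc (Suc j))) ^ Suc n"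
          by (rule mult_left_mono[OF pm]) simp
        finally show "norm (real (Y (Suc n) \<omega>) * norm z ^ Suc n)
          \<le> real (Y (Suc n) \<omega>) * (1 - 1 / real (Suc (Suc j))) ^ Suc n" .
      qed
    qed
    from det_main[OF z1 this]
    show "\<exists>s. (\<lambda>k. of_nat (Xdiv Y (Suc k) \<omega>) / of_nat (Suc k) * z ^ Suc k) sums s
         \<and> (\<lambda>k. (1 - z ^ Suc k) ^ Y (Suc k) \<omega>) has_prod exp (- s)"
      by (simp only: Xdiv_def)
  qed
qed

end
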